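(* Let $W$ be a BISO channel with $\eta=\eta_{KL}(W)$ and capacity $C(W)$. Then $$C_s\big(\mathrm{BEC}(1-\eta),W\big)=\eta-C(W),\qquad C_s\Big(W,\mathrm{BSC}\big(\tfrac{1-\sqrt\eta}{2}\big)\Big)=C(W)-1+h_2\Big(\tfrac{1-\sqrt\eta}{2}\Big).$$
   Context: A binary-input symmetric-output (BISO) channel is a channel $P_{Y|X}$ with input alphabet $\{0,1\}$ and finite output alphabet $\mathcal Y=\{0,\pm1,\dots,\pm l\}$ for some integer $l\ge 1$ (some transition probabilities may be zero), such that $P_{Y|X}(y|0)=P_{Y|X}(-y|1)$ for all $y$. $\mathrm{BSC}(p)$: binary symmetric channel with crossover probability $p$; $\mathrm{BEC}(\varepsilon)$: binary erasure channel with erasure probability $\varepsilon$. All logarithms are base 2; $h_2(p)=-p\log_2p-(1-p)\log_2(1-p)$. Capacity $C(P)=\sup_{P_X}I(X:Y)$. $\eta_{KL}(P)=\sup_{P_X,Q_X}\frac{D(P\circ P_X\|P\circ Q_X)}{D(P_X\|Q_X)}$ (over inputs with $0<D(P_X\|Q_X)<\infty$). For a wiretap setting with main channel $A=P_{Y|X}$ and eavesdropper channel $B=P_{Z|X}$ (same binary input), the secrecy capacity is $C_s(A,B)=\max_{P_X}\big(I(X:Y)-I(X:Z)\big)$. *)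

theory Defs
  imports Complex_Main
begin

text \<open>Binary input alphabet {0,1} is rendered as bool (False = 0, True = 1).
  A channel with output alphabet {-l..l} is a pair (l, W) with
  W :: bool \<Rightarrow> int \<Rightarrow> real, W x y = P(Y=y | X=x); only values on {-l..l} matter.\<close>

definition out_alph :: "nat \<Rightarrow> int set" where
  "out_alph l = {- int l .. int l}"

definition is_channel :: "nat \<Rightarrow> (bool \<Rightarrow> int \<Rightarrow> real) \<Rightarrow> bool" where
  "is_channel l W \<longleftrightarrow> (\<forall>x. \<forall>y\<in>out_alph l. 0 \<le> W x y) \<and> (\<forall>x. (\<Sum>y\<in>out_alph l. W x y) = 1)"

definition biso :: "nat \<Rightarrow> (bool \<Rightarrow> int \<Rightarrow> real) \<Rightarrow> bool" where
  "biso l W \<longleftrightarrow> 1 \<le> l \<and> is_channel l W \<and> (\<forall>y\<in>out_alph l. W False y = W True (- y))"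

definition is_input_dist :: "(bool \<Rightarrow> real) \<Rightarrow> bool" where
  "is_input_dist P \<longleftrightarrow> (\<forall>x. 0 \<le> P x) \<and> P False + P True = 1"

definition out_dist :: "(bool \<Rightarrow> int \<Rightarrow> real) \<Rightarrow> (bool \<Rightarrow> real) \<Rightarrow> int \<Rightarrow> real" where
  "out_dist W P y = (\<Sum>x\<in>UNIV. P x * W x y)"

text \<open>KL divergence (base 2) on a finite set A, with 0 log(0/q) = 0; it is a finite
  real number whenever p is absolutely continuous w.r.t. q on A.\<close>
definition kl :: "'a set \<Rightarrow> ('a \<Rightarrow> real) \<Rightarrow> ('a \<Rightarrow> real) \<Rightarrow> real" where
  "kl A p q = (\<Sum>a\<in>A. if p a = 0 then 0 else p a * log 2 (p a / q a))"

definition abs_cont :: "'a set \<Rightarrow> ('a \<Rightarrow> real) \<Rightarrow> ('a \<Rightarrow> real) \<Rightarrow> bool" where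
  "abs_cont A p q \<longleftrightarrow> (\<forall>a\<in>A. p a \<noteq> 0 \<longrightarrow> q a \<noteq> 0)"

definition mutual_info :: "nat \<Rightarrow> (bool \<Rightarrow> int \<Rightarrow> real) \<Rightarrow> (bool \<Rightarrow> real) \<Rightarrow> real" where
  "mutual_info l W P =
     (\<Sum>x\<in>UNIV. \<Sum>y\<in>out_alph l.
        if P x * W x y = 0 then 0 else P x * W x y * log 2 (W x y / out_dist W P y))"

definition capacity :: "nat \<Rightarrow> (bool \<Rightarrow> int \<Rightarrow> real) \<Rightarrow> real" where
  "capacity l W = Sup {mutual_info l W P | P. is_input_dist P}"

text \<open>Contraction coefficient for KL divergence; D(P_X||Q_X) < \<infinity> iff P_X \<ll> Q_X.\<close>
definition eta_KL :: "nat \<Rightarrow> (bool \<Rightarrow> int \<Rightarrow> real) \<Rightarrow> real" where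
  "eta_KL l W = Sup {kl (out_alph l) (out_dist W P) (out_dist W Q) / kl UNIV P Q | P Q.
      is_input_dist P \<and> is_input_dist Q \<and> abs_cont UNIV P Q \<and> 0 < kl UNIV P Q}"

definition secrecy_capacity ::
  "nat \<Rightarrow> (bool \<Rightarrow> int \<Rightarrow> real) \<Rightarrow> nat \<Rightarrow> (bool \<Rightarrow> int \<Rightarrow> real) \<Rightarrow> real" where
  "secrecy_capacity la A lb B =
     Sup {mutual_info la A P - mutual_info lb B P | P. is_input_dist P}"

text \<open>BEC(e) with output alphabet {0,\<plusminus>1} (l = 1): 0 is the erasure, input 0 \<mapsto> +1, input 1 \<mapsto> -1.\<close>
definition bec :: "real \<Rightarrow> bool \<Rightarrow> int \<Rightarrow> real" where
  "bec e x y = (if y = 0 then e else if y = (if x then -1 else 1) then 1 - e else 0)"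

text \<open>BSC(p) with output alphabet {\<plusminus>1} inside {0,\<plusminus>1} (l = 1, P(0|x) = 0).\<close>
definition bsc :: "real \<Rightarrow> bool \<Rightarrow> int \<Rightarrow> real" where
  "bsc p x y = (if y = (if x then -1 else 1) then 1 - p
                else if y = (if x then 1 else -1) then p else 0)"

definition h2 :: "real \<Rightarrow> real" where
  "h2 p = (if p = 0 then 0 else - p * log 2 p) + (if p = 1 then 0 else - (1 - p) * log 2 (1 - p))"

end

theory Submission
  imports Defs "HOL-Real_Asymp.Real_Asymp"
begin


definition L :: "real \<Rightarrow> real" where "L t = t * ln t"

lemma L_tendsto0: "((\<lambda>t::real. t * ln t) \<longlongrightarrow> 0) (at_right 0)"
  by real_asymp

lemma L_cont: "continuous_on {0..} L"
proof -
  have "continuous (at t within {0..}) L" if "t \<ge> 0" for t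
  proof (cases "t = 0")
    case True
    have "(L \<longlongrightarrow> L 0) (at 0 within {0<..})"
    proof -
      have e: "L = (\<lambda>t. t * ln t)" by (rule ext) (simp add: L_def)
      show ?thesis using L_tendsto0 by (simp add: e)
    qed
    then have "(L \<longlongrightarrow> L 0) (at 0 within {0..})"
      by (simp add: at_within_Ici_at_right)
    then show ?thesis using True by (simp add: continuous_within)
  next
    case False
    then have "t > 0" using that by simp
    then have "isCont L t" unfolding L_def by (intro continuous_intros) auto
    then show ?thesis using continuous_at_imp_continuous_at_within by blast
  qed
  then show ?thesis by (simp add: continuous_on_eq_continuous_within)
qed

definition ath :: "real \<Rightarrow> real" where "ath z = (ln (1+z) - ln (1-z)) / 2"
definition phi :: "real \<Rightarrow> real" where "phi u = (L (1+u) + L (1-u)) / 2"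
definition dk :: "real \<Rightarrow> real \<Rightarrow> real" where
  "dk u v = (L (1+u) - (1+u) * ln (1+v) + L (1-u) - (1-u) * ln (1-v)) / 2"

lemma L_deriv: "t > 0 \<Longrightarrow> (L has_real_derivative ln t + 1) (at t)"
  unfolding L_def[abs_def] by (auto intro!: derivative_eq_intros)

lemma sq_lt1: "-1 < (z::real) \<Longrightarrow> z < 1 \<Longrightarrow> z*z < 1"
proof -
  assume "-1 < z" "z < 1"
  then have "\<bar>z\<bar> < 1" by auto
  then have "\<bar>z\<bar>*\<bar>z\<bar> < 1*1" by (intro abs_mult_less) auto
  then show ?thesis by (simp add: abs_mult[symmetric])
qed

lemma ath_deriv: "-1 < z \<Longrightarrow> z < 1 \<Longrightarrow> (ath has_real_derivative 1/(1-z^2)) (at z)"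
  unfolding ath_def[abs_def]
  apply (rule derivative_eq_intros refl | simp)+
  using sq_lt1[of z] by (simp add: field_simps power2_eq_square)


lemma L_chain:
  "(f has_real_derivative f') (at x) \<Longrightarrow> f x > 0 \<Longrightarrow> D = (ln (f x) + 1) * f' \<Longrightarrow> ((\<lambda>x. L (f x)) has_real_derivative D) (at x)"
  using DERIV_chain2[OF L_deriv] by blast

lemma ath_chain:
  "(f has_real_derivative f') (at x) \<Longrightarrow> -1 < f x \<Longrightarrow> f x < 1 \<Longrightarrow> D = (1/(1-(f x)^2)) * f' \<Longrightarrow> ((\<lambda>x. ath (f x)) has_real_derivative D) (at x)"
  using DERIV_chain2[OF ath_deriv] by blast

lemma dk_deriv:
  assumes "-1 < c*x" "c*x < 1"
  shows "((\<lambda>x. dk (c*x) w) has_real_derivative c * (ath (c*x) - ath w)) (at x)"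
proof -
  have a1: "((\<lambda>x. L (1 + c*x)) has_real_derivative (ln(1+c*x)+1)*c) (at x)"
    by (rule L_chain[of "\<lambda>x. 1 + c*x" c]) (use assms in \<open>auto intro!: derivative_eq_intros\<close>)
  have a2: "((\<lambda>x. L (1 - c*x)) has_real_derivative (ln(1-c*x)+1)*(-c)) (at x)"
    by (rule L_chain[of "\<lambda>x. 1 - c*x" "-c"]) (use assms in \<open>auto intro!: derivative_eq_intros\<close>)
  have a3: "((\<lambda>x. (1 + c*x) * ln (1+w)) has_real_derivative c * ln(1+w)) (at x)"
    by (auto intro!: derivative_eq_intros)
  have a4: "((\<lambda>x. (1 - c*x) * ln (1-w)) has_real_derivative (-c) * ln(1-w)) (at x)"
    by (auto intro!: derivative_eq_intros)
  have "((\<lambda>x. (L (1+c*x) - (1+c*x) * ln (1+w) + L (1-c*x) - (1-c*x) * ln (1-w)) / 2) has_real_derivative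
     ((ln(1+c*x)+1)*c - c * ln(1+w) + (ln(1-c*x)+1)*(-c) - (-c) * ln(1-w)) / 2) (at x)"
    by (intro DERIV_cdivide DERIV_diff DERIV_add a1 a2 a3 a4)
  then show ?thesis unfolding dk_def
    by (rule DERIV_cong) (simp add: ath_def field_simps)
qed


lemma L_comp_cont: "continuous_on S f \<Longrightarrow> (\<And>x. x \<in> S \<Longrightarrow> f x \<ge> 0) \<Longrightarrow> continuous_on S (\<lambda>x. L (f x))"
  by (rule continuous_on_compose2[OF L_cont]) auto

lemma dk_cont:
  assumes "\<bar>c\<bar> \<le> 1"
  shows "continuous_on {-1..1} (\<lambda>x. dk (c*x) w)"
proof -
  have b: "\<bar>c*x\<bar> \<le> 1" if "x \<in> {-1..1}" for x
    using that assms by (auto simp: abs_mult intro: mult_le_one)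
  have "continuous_on {-1..1} (\<lambda>x. L (1 + c*x))"
  proof (rule L_comp_cont)
    show "continuous_on {-1..1} (\<lambda>x::real. 1 + c*x)" by (intro continuous_intros)
    fix x :: real assume "x \<in> {-1..1}" then show "0 \<le> 1 + c*x" using b[of x] by (simp add: abs_le_iff)
  qed
  moreover have "continuous_on {-1..1} (\<lambda>x. L (1 - c*x))"
  proof (rule L_comp_cont)
    show "continuous_on {-1..1} (\<lambda>x::real. 1 - c*x)" by (intro continuous_intros)
    fix x :: real assume "x \<in> {-1..1}" then show "0 \<le> 1 - c*x" using b[of x] by (simp add: abs_le_iff)
  qed
  ultimately show ?thesis unfolding dk_def by (intro continuous_intros) auto
qed

lemma K_deriv:
  assumes th: "0 < th" "th \<le> 1" and t1: "-1 < t" "t < 1"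
  shows "((\<lambda>t. th * ath t - ath (th*t)) has_real_derivative th * (1/(1-t^2)) - (1/(1-(th*t)^2)) * th) (at t)"
proof -
  have tt: "-1 < th*t" "th*t < 1" using t1 th
    by (smt (verit, best) mult_le_cancel_left1 mult_minus_right)+
  have "((\<lambda>t. ath (th*t)) has_real_derivative (1/(1-(th*t)^2)) * th) (at t)"
    by (rule ath_chain[of "\<lambda>t. th*t" th]) (use tt in \<open>auto intro!: derivative_eq_intros\<close>)
  then show ?thesis
    by (intro DERIV_diff DERIV_cmult ath_deriv t1)
qed

lemma K_mono:
  assumes th: "0 < th" "th \<le> 1" and z: "-1 < z1" "z1 \<le> z2" "z2 < 1"
  shows "th * ath z1 - ath (th*z1) \<le> th * ath z2 - ath (th*z2)"
proof (rule DERIV_nonneg_imp_increasing_open[OF z(2)])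
  fix t assume t: "z1 < t" "t < z2"
  then have t1: "-1 < t" "t < 1" using z by auto
  have "th * (1/(1-t^2)) - (1/(1-(th*t)^2)) * th \<ge> 0"
  proof -
    have "t*t < 1" using sq_lt1 t1 by auto
    then have "t^2 < 1" by (simp add: power2_eq_square)
    moreover have "(th*t)^2 \<le> t^2"
    proof -
      have "th^2 \<le> 1" using th by (simp add: power_le_one)
      then show ?thesis using mult_right_mono[of "th^2" 1 "t^2"] by (simp add: power_mult_distrib)
    qed
    ultimately have "1/(1-(th*t)^2) \<le> 1/(1-t^2)" by (intro divide_left_mono) auto
    then have "th * (1/(1-(th*t)^2)) \<le> th * (1/(1-t^2))" using th by (intro mult_left_mono) auto
    then show ?thesis by (simp add: mult.commute)
  qed
  then show "\<exists>y. ((\<lambda>t. th * ath t - ath (th*t)) has_real_derivative y) (at t) \<and> 0 \<le> y"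
    using K_deriv[OF th t1] by blast
next
  show "continuous_on {z1..z2} (\<lambda>t. th * ath t - ath (th*t))"
  proof (intro continuous_at_imp_continuous_on ballI)
    fix t assume "t \<in> {z1..z2}"
    then have t1: "-1 < t" "t < 1" using z by auto
    show "isCont (\<lambda>t. th * ath t - ath (th*t)) t" by (rule DERIV_isCont[OF K_deriv[OF th t1]])
  qed
qed


lemma dk_self: "dk v v = 0"
  by (simp add: dk_def L_def)

lemma S1_pos:
  assumes th: "0 < th" "th \<le> 1" and v: "-1 < v" "v < 1" and x: "-1 \<le> x" "x \<le> 1"
  shows "dk (th*x) (th*v) \<le> th^2 * dk x v"
proof -
  define G where "G x = th^2 * dk (1*x) v - dk (th*x) (th*v)" for x
  have Gc: "continuous_on {-1..1} G"
    unfolding G_def using th by (intro continuous_intros dk_cont) auto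
  have Gd: "(G has_real_derivative th * ((th * ath t - ath (th*t)) - (th * ath v - ath (th*v)))) (at t)"
    if "-1 < t" "t < 1" for t
  proof -
    have tt: "-1 < th*t" "th*t < 1" using that th
      by (smt (verit, best) mult_le_cancel_left1 mult_minus_right)+
    have "(G has_real_derivative th^2 * (1 * (ath (1*t) - ath v)) - th * (ath (th*t) - ath (th*v))) (at t)"
      unfolding G_def[abs_def]
      by (intro DERIV_diff DERIV_cmult dk_deriv) (use that tt in auto)
    then show ?thesis by (rule DERIV_cong) (simp add: algebra_simps power2_eq_square)
  qed
  have G0: "G v = 0" by (simp add: G_def dk_self)
  have "G x \<ge> 0"
  proof (cases "v \<le> x")
    case True
    have "G v \<le> G x"
    proof (rule DERIV_nonneg_imp_increasing_open[OF True])
      fix t assume t: "v < t" "t < x"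
      have "th * ath v - ath (th*v) \<le> th * ath t - ath (th*t)"
        using K_mono[OF th, of v t] t v x by auto
      then show "\<exists>y. (G has_real_derivative y) (at t) \<and> 0 \<le> y"
        using Gd[of t] t v x th by (intro exI[of _ "th * ((th * ath t - ath (th*t)) - (th * ath v - ath (th*v)))"]) auto
    next
      show "continuous_on {v..x} G" by (rule continuous_on_subset[OF Gc]) (use v x in auto)
    qed
    then show ?thesis using G0 by simp
  next
    case False
    then have xv: "x \<le> v" by simp
    have "G v \<le> G x"
    proof (rule DERIV_nonpos_imp_decreasing_open[OF xv])
      fix t assume t: "x < t" "t < v"
      have "th * ath t - ath (th*t) \<le> th * ath v - ath (th*v)"
        using K_mono[OF th, of t v] t v x by auto
      then show "\<exists>y. (G has_real_derivative y) (at t) \<and> y \<le> 0"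
        using Gd[of t] t v x th
        by (intro exI[of _ "th * ((th * ath t - ath (th*t)) - (th * ath v - ath (th*v)))"])
           (auto simp: mult_nonneg_nonpos)
    next
      show "continuous_on {x..v} G" by (rule continuous_on_subset[OF Gc]) (use v x in auto)
    qed
    then show ?thesis using G0 by simp
  qed
  then show ?thesis by (simp add: G_def)
qed


lemma B_nonneg:
  assumes "0 \<le> z" "z < 1"
  shows "ath z \<le> z / (1 - z^2)"
proof -
  define B where "B z = z / (1 - z^2) - ath z" for z
  have Bd: "(B has_real_derivative 2*t^2/(1-t^2)^2) (at t)" if "0 \<le> t" "t < 1" for t
  proof -
    have t2: "t^2 < 1" using sq_lt1[of t] that by (simp add: power2_eq_square)
    have f: "((\<lambda>x. x / (1 - x^2)) has_real_derivative (1*(1-t^2) - t*(-(2*t)))/((1-t^2)*(1-t^2))) (at t)"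
      by (rule DERIV_divide) (use t2 in \<open>auto intro!: derivative_eq_intros simp: power2_eq_square\<close>)
    have "(B has_real_derivative ((1*(1-t^2) - t*(-(2*t)))/((1-t^2)*(1-t^2)) - 1/(1-t^2))) (at t)"
      unfolding B_def[abs_def]
      by (intro DERIV_diff ath_deriv f) (use that t2 in auto)
    have nz: "1 - t^2 \<noteq> 0" using t2 by simp
    from this[unfolded power2_eq_square] have nz': "1 - t*t \<noteq> 0" .
    show ?thesis
      apply (rule DERIV_cong[OF \<open>(B has_real_derivative _) (at t)\<close>])
      apply (simp add: power2_eq_square)
      apply (simp add: nz' divide_simps)
      done
  qed
  have "B 0 \<le> B z"
  proof (rule DERIV_nonneg_imp_increasing_open[OF assms(1)])
    fix t assume "0 < t" "t < z"
    then show "\<exists>y. (B has_real_derivative y) (at t) \<and> 0 \<le> y" using Bd[of t] assms by auto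
  next
    show "continuous_on {0..z} B"
    proof (rule continuous_at_imp_continuous_on, rule ballI)
      fix x assume "x \<in> {0..z}"
      then have "0 \<le> x" "x < 1" using assms by auto
      then show "isCont B x" using Bd by (blast intro: DERIV_isCont)
    qed
  qed
  then show ?thesis by (simp add: B_def ath_def)
qed

lemma Q_mono:
  assumes "0 < z1" "z1 \<le> z2" "z2 < 1"
  shows "ath z1 / z1 \<le> ath z2 / z2"
proof -
  define Q where "Q z = ath z / z" for z
  have Qd: "(Q has_real_derivative (t * (1/(1-t^2)) - ath t) / t^2) (at t)" if "0 < t" "t < 1" for t
  proof -
    have "(Q has_real_derivative ((1/(1-t^2)) * t - ath t * 1) / (t*t)) (at t)"
      unfolding Q_def[abs_def]
      by (intro DERIV_divide ath_deriv derivative_intros) (use that in auto)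
    then show ?thesis by (rule DERIV_cong) (simp add: power2_eq_square algebra_simps)
  qed
  have "Q z1 \<le> Q z2"
  proof (rule DERIV_nonneg_imp_increasing_open[OF assms(2)])
    fix t assume t: "z1 < t" "t < z2"
    then have "0 < t" "t < 1" using assms by auto
    moreover have "0 \<le> (t * (1/(1-t^2)) - ath t) / t^2"
      using B_nonneg[of t] \<open>0 < t\<close> \<open>t < 1\<close> by (intro divide_nonneg_pos) auto
    ultimately show "\<exists>y. (Q has_real_derivative y) (at t) \<and> 0 \<le> y" using Qd by blast
  next
    show "continuous_on {z1..z2} Q"
    proof (rule continuous_at_imp_continuous_on, rule ballI)
      fix x assume "x \<in> {z1..z2}"
      then have "0 < x" "x < 1" using assms by auto
      then show "isCont Q x" using Qd by (blast intro: DERIV_isCont)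
    qed
  qed
  then show ?thesis by (simp add: Q_def)
qed


lemma half_ineq:
  assumes "0 \<le> s" "0 < t"
  shows "s - t \<le> L s - s * ln t"
proof (cases "s = 0")
  case True then show ?thesis using assms by (simp add: L_def)
next
  case False
  then have s: "s > 0" using assms by simp
  have "ln (t/s) \<le> t/s - 1" using s assms by (intro ln_le_minus_one) auto
  then have "s * ln (t/s) \<le> s * (t/s - 1)" using s by (intro mult_left_mono) auto
  also have "\<dots> = t - s" using s by (simp add: field_simps)
  finally show ?thesis using s assms by (simp add: L_def ln_div algebra_simps)
qed

lemma dk_nonneg:
  assumes "-1 \<le> x" "x \<le> 1" "-1 < v" "v < 1"
  shows "0 \<le> dk x v"
proof -
  have "1+x - (1+v) \<le> L (1+x) - (1+x) * ln (1+v)" using assms by (intro half_ineq) auto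
  moreover have "1-x - (1-v) \<le> L (1-x) - (1-x) * ln (1-v)" using assms by (intro half_ineq) auto
  ultimately have "0 \<le> L (1+x) - (1+x) * ln (1+v) + L (1-x) - (1-x) * ln (1-v)" by linarith
  then show ?thesis unfolding dk_def by simp
qed

lemma dk_sym: "dk (-u) (-v) = dk u v"
  unfolding dk_def by (simp add: algebra_simps)

lemma S1:
  assumes th: "\<bar>th\<bar> \<le> 1" and v: "-1 < v" "v < 1" and x: "-1 \<le> x" "x \<le> 1"
  shows "dk (th*x) (th*v) \<le> th^2 * dk x v"
proof -
  consider "th > 0" | "th = 0" | "th < 0" by linarith
  then show ?thesis
  proof cases
    case 1 then show ?thesis using S1_pos[of th v x] th v x by auto
  next
    case 2 then show ?thesis using dk_self[of 0] by simp
  next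
    case 3
    have "dk ((-th)*(-x)) ((-th)*(-v)) \<le> (-th)^2 * dk (-x) (-v)"
      using S1_pos[of "-th" "-v" "-x"] th v x 3 by auto
    then show ?thesis by (simp add: dk_sym)
  qed
qed

lemma phi_dk: "phi u = dk u 0"
  by (simp add: phi_def dk_def)

lemma phi_even: "phi (-u) = phi u"
  by (simp add: phi_def)

lemma phi_nonneg: "-1 \<le> u \<Longrightarrow> u \<le> 1 \<Longrightarrow> 0 \<le> phi u"
  by (simp add: phi_dk dk_nonneg)

lemma phi_mono:
  assumes "0 \<le> u" "u \<le> w" "w \<le> 1"
  shows "phi u \<le> phi w"
proof (cases "w = 0")
  case True then show ?thesis using assms by simp
next
  case False
  then have w: "w > 0" using assms by simp
  have "dk ((u/w)*w) ((u/w)*0) \<le> (u/w)^2 * dk w 0"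
    using assms w by (intro S1) auto
  also have "\<dots> \<le> 1 * dk w 0"
    using assms w dk_nonneg[of w 0] by (intro mult_right_mono) (auto simp: power_le_one)
  finally show ?thesis using w by (simp add: phi_dk)
qed

lemma tangent:
  assumes x: "0 \<le> x" "x \<le> 1" and mu: "0 < mu" "mu < 1" and u: "0 \<le> u" "u \<le> 1"
  shows "dk (x*mu) 0 + (x * ath (x*mu) / (2*mu)) * (u^2 - mu^2) \<le> dk (x*u) 0"
proof (cases "x = 0")
  case True then show ?thesis by simp
next
  case False
  then have xp: "x > 0" using x by simp
  define c where "c = x * ath (x*mu) / (2*mu)"
  define H where "H u = dk (x*u) 0 - dk (x*mu) 0 - c * (u^2 - mu^2)" for u
  have Hd: "(H has_real_derivative x * ath (x*t) - c * (2*t)) (at t)" if "0 < t" "t < 1" for t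
  proof -
    have a: "x*t \<le> 1*t" using x that by (intro mult_right_mono) auto
    have b: "0 < x*t" using that xp by simp
    have tt: "-1 < x*t" "x*t < 1" using a b that by linarith+
    have p: "((\<lambda>u. u^2) has_real_derivative 2*t) (at t)" by (auto intro!: derivative_eq_intros)
    have "(H has_real_derivative x * (ath (x*t) - ath 0) - 0 - c * (2*t - 0)) (at t)"
      unfolding H_def[abs_def]
      by (intro DERIV_diff DERIV_cmult dk_deriv p derivative_intros tt)
    then show ?thesis by (rule DERIV_cong) (simp add: ath_def)
  qed
  have Hc: "continuous_on {0..1} H"
  proof -
    have "continuous_on {-1..1} (\<lambda>u. dk (x*u) 0)" using x by (intro dk_cont) auto
    then have "continuous_on {0..1} (\<lambda>u. dk (x*u) 0)" by (rule continuous_on_subset) auto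
    then show ?thesis unfolding H_def by (intro continuous_intros)
  qed
  have H0: "H mu = 0" by (simp add: H_def)
  have key: "x * ath (x*t) - c * (2*t) = x * (x * t) * (ath (x*t) / (x*t) - ath (x*mu) / (x*mu))" if "t > 0" for t
    using that xp mu by (simp add: c_def field_simps)
  have "H u \<ge> 0"
  proof (cases "mu \<le> u")
    case True
    have "H mu \<le> H u"
    proof (rule DERIV_nonneg_imp_increasing_open[OF True])
      fix t assume t: "mu < t" "t < u"
      then have t1: "0 < t" "t < 1" using mu u by auto
      have "ath (x*mu) / (x*mu) \<le> ath (x*t) / (x*t)"
      proof (rule Q_mono)
        show "0 < x*mu" using xp mu by simp
        show "x*mu \<le> x*t" using t x by (intro mult_left_mono) auto
        have "x*t \<le> 1*t" using x t1 by (intro mult_right_mono) auto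
        then show "x*t < 1" using t1 by linarith
      qed
      then have "0 \<le> x * ath (x*t) - c * (2*t)" using key[of t] t1 xp by simp
      then show "\<exists>y. (H has_real_derivative y) (at t) \<and> 0 \<le> y" using Hd[OF t1] by blast
    next
      show "continuous_on {mu..u} H" by (rule continuous_on_subset[OF Hc]) (use mu u in auto)
    qed
    then show ?thesis using H0 by simp
  next
    case False
    then have um: "u \<le> mu" by simp
    have "H mu \<le> H u"
    proof (rule DERIV_nonpos_imp_decreasing_open[OF um])
      fix t assume t: "u < t" "t < mu"
      then have t1: "0 < t" "t < 1" using mu u by auto
      have "ath (x*t) / (x*t) \<le> ath (x*mu) / (x*mu)"
      proof (rule Q_mono)
        show "0 < x*t" using xp t1 by simp
        show "x*t \<le> x*mu" using t x by (intro mult_left_mono) auto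
        have "x*mu \<le> 1*mu" using x mu by (intro mult_right_mono) auto
        then show "x*mu < 1" using mu by linarith
      qed
      then have "x * ath (x*t) - c * (2*t) \<le> 0" using key[of t] t1 xp by (simp add: mult_nonneg_nonpos)
      then show "\<exists>y. (H has_real_derivative y) (at t) \<and> y \<le> 0" using Hd[OF t1] by blast
    next
      show "continuous_on {u..mu} H" by (rule continuous_on_subset[OF Hc]) (use mu u in auto)
    qed
    then show ?thesis using H0 by simp
  qed
  then show ?thesis by (simp add: H_def c_def)
qed




definition tm :: "real \<Rightarrow> real \<Rightarrow> real" where
  "tm p q = (if p = 0 then 0 else p * log 2 (p/q))"

definition pairD :: "real \<Rightarrow> real \<Rightarrow> real \<Rightarrow> real \<Rightarrow> real" where
  "pairD al be a b = tm (a*al+(1-a)*be) (b*al+(1-b)*be) + tm (a*be+(1-a)*al) (b*be+(1-b)*al)"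

lemma tm_half:
  assumes "w > 0" "s \<ge> 0" "t > 0"
  shows "tm (w*s/2) (w*t/2) = w * (L s - s * ln t) / (2 * ln 2)"
proof (cases "s = 0")
  case True then show ?thesis by (simp add: tm_def L_def)
next
  case False
  then have s: "s > 0" using assms by simp
  have "w*s/2 / (w*t/2) = s/t" using assms by simp
  then show ?thesis using s assms
    by (simp add: tm_def L_def log_def ln_div field_simps)
qed

lemma tm_same: "tm p p = 0"
  by (simp add: tm_def)

lemma tm_scale: "c \<ge> 0 \<Longrightarrow> tm (c*p) (c*q) = c * tm p q"
  by (cases "c = 0") (auto simp: tm_def)

lemma pairD_scale: "c \<ge> 0 \<Longrightarrow> pairD (c*al) (c*be) a b = c * pairD al be a b"
proof -
  assume c: "c \<ge> 0"
  have 1: "tm (a*(c*al)+(1-a)*(c*be)) (b*(c*al)+(1-b)*(c*be)) = tm (c*(a*al+(1-a)*be)) (c*(b*al+(1-b)*be))"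
    by (simp add: algebra_simps)
  have 2: "tm (a*(c*be)+(1-a)*(c*al)) (b*(c*be)+(1-b)*(c*al)) = tm (c*(a*be+(1-a)*al)) (c*(b*be+(1-b)*al))"
    by (simp add: algebra_simps)
  show ?thesis unfolding pairD_def 1 2 tm_scale[OF c] by (simp add: distrib_left)
qed

lemma pairD_dk:
  assumes ab: "0 \<le> al" "0 \<le> be" "0 < al + be" and a: "0 \<le> a" "a \<le> 1" and b: "0 < b" "b < 1"
  shows "pairD al be a b = (al+be) * dk (((al-be)/(al+be))*(2*a-1)) (((al-be)/(al+be))*(2*b-1)) / ln 2"
proof -
  define w where "w = al + be"
  define th where "th = (al-be)/(al+be)"
  define x where "x = 2*a-1"
  define y where "y = 2*b-1"
  have w: "w > 0" using ab by (simp add: w_def)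
  have th: "\<bar>th\<bar> \<le> 1" using ab by (simp add: th_def abs_le_iff divide_le_eq_1 le_divide_eq)
  have x: "\<bar>x\<bar> \<le> 1" using a by (simp add: x_def abs_le_iff)
  have y: "\<bar>y\<bar> < 1" using b by (simp add: y_def abs_less_iff)
  have thx: "\<bar>th*x\<bar> \<le> 1" using th x by (simp add: abs_mult mult_le_one)
  have thy: "\<bar>th*y\<bar> < 1"
  proof -
    have "\<bar>th\<bar>*\<bar>y\<bar> \<le> 1*\<bar>y\<bar>" using th by (intro mult_right_mono) auto
    then show ?thesis using y by (simp add: abs_mult)
  qed
  have e1: "a*al+(1-a)*be = w*(1+th*x)/2" using w
    by (simp add: w_def th_def x_def field_simps; simp add: algebra_simps)
  have e2: "b*al+(1-b)*be = w*(1+th*y)/2" using w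
    by (simp add: w_def th_def y_def field_simps; simp add: algebra_simps)
  have e3: "a*be+(1-a)*al = w*(1-th*x)/2" using w
    by (simp add: w_def th_def x_def field_simps; simp add: algebra_simps)
  have e4: "b*be+(1-b)*al = w*(1-th*y)/2" using w
    by (simp add: w_def th_def y_def field_simps; simp add: algebra_simps)
  have "pairD al be a b = tm (w*(1+th*x)/2) (w*(1+th*y)/2) + tm (w*(1-th*x)/2) (w*(1-th*y)/2)"
    by (simp add: pairD_def e1 e2 e3 e4)
  also have "\<dots> = w * (L (1+th*x) - (1+th*x) * ln (1+th*y)) / (2 * ln 2)
                 + w * (L (1-th*x) - (1-th*x) * ln (1-th*y)) / (2 * ln 2)"
    using w thx thy by (simp add: tm_half abs_le_iff abs_less_iff)
  also have "\<dots> = w * dk (th*x) (th*y) / ln 2"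
    by (simp add: dk_def field_simps)
  finally show ?thesis by (simp add: w_def th_def x_def y_def)
qed

lemma th_bound:
  fixes al be :: real
  assumes ab: "0 \<le> al" "0 \<le> be"
  shows "\<bar>(al-be)/(al+be)\<bar> \<le> 1"
proof (cases "al + be = 0")
  case True then show ?thesis by simp
next
  case False
  then have w: "0 < al+be" using ab by simp
  have "\<bar>al-be\<bar> \<le> al+be" using ab by (simp add: abs_le_iff)
  then show ?thesis using w by (simp add: abs_divide)
qed

lemma wth2:
  fixes al be :: real
  assumes "0 < al + be"
  shows "(al+be) * ((al-be)/(al+be))^2 = (al-be)^2/(al+be)"
proof -
  have g: "w * (d/w)^2 = d^2/w" if "w \<noteq> 0" for w d :: real
    using that by (simp add: power2_eq_square field_simps)
  have "al + be \<noteq> 0" using assms by simp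
  then show ?thesis by (rule g)
qed

lemma abs_mult_le1: "\<bar>p\<bar> \<le> 1 \<Longrightarrow> \<bar>q::real\<bar> \<le> 1 \<Longrightarrow> \<bar>p*q\<bar> \<le> 1"
  by (simp add: abs_mult mult_le_one)

lemma abs_mult_lt1: "\<bar>p\<bar> \<le> 1 \<Longrightarrow> \<bar>q::real\<bar> < 1 \<Longrightarrow> \<bar>p*q\<bar> < 1"
proof -
  assume "\<bar>p\<bar> \<le> 1" "\<bar>q\<bar> < 1"
  then have "\<bar>p\<bar>*\<bar>q\<bar> \<le> 1*\<bar>q\<bar>" by (intro mult_right_mono) auto
  then show ?thesis using \<open>\<bar>q\<bar> < 1\<close> by (simp add: abs_mult)
qed

lemma pairD_00: "pairD 0 0 a b = 0"
  by (simp add: pairD_def tm_def)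

lemma pairD_nonneg:
  assumes ab: "0 \<le> al" "0 \<le> be" and a: "0 \<le> a" "a \<le> 1" and b: "0 < b" "b < 1"
  shows "0 \<le> pairD al be a b"
proof (cases "al + be = 0")
  case True then have "al = 0" "be = 0" using ab by auto
  then show ?thesis by (simp add: pairD_00)
next
  case False
  then have w: "0 < al + be" using ab by simp
  define th where "th = (al-be)/(al+be)"
  have thb: "\<bar>th\<bar> \<le> 1" using th_bound[OF ab] unfolding th_def .
  have h1: "\<bar>th*(2*a-1)\<bar> \<le> 1" by (rule abs_mult_le1[OF thb]) (use a in \<open>simp add: abs_le_iff\<close>)
  have h2: "\<bar>th*(2*b-1)\<bar> < 1" by (rule abs_mult_lt1[OF thb]) (use b in \<open>simp add: abs_less_iff\<close>)
  have "0 \<le> dk (th*(2*a-1)) (th*(2*b-1))"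
    by (rule dk_nonneg) (use h1 h2 in \<open>simp_all add: abs_le_iff abs_less_iff\<close>)
  then show ?thesis using pairD_dk[OF ab w a b] w unfolding th_def by simp
qed

lemma pairD_P1:
  assumes ab: "0 \<le> al" "0 \<le> be" and a: "0 \<le> a" "a \<le> 1" and b: "0 < b" "b < 1"
  shows "pairD al be a b \<le> ((al-be)^2/(al+be)) * pairD 1 0 a b"
proof (cases "al + be = 0")
  case True then have "al = 0" "be = 0" using ab by auto
  then show ?thesis by (simp add: pairD_00)
next
  case False
  then have w: "0 < al + be" using ab by simp
  let ?th = "(al-be)/(al+be)"
  have k: "dk (?th*(2*a-1)) (?th*(2*b-1)) \<le> ?th^2 * dk (2*a-1) (2*b-1)"
    using th_bound[OF ab] a b by (intro S1) auto
  have p1: "pairD 1 0 a b = dk (2*a-1) (2*b-1) / ln 2"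
    using pairD_dk[of 1 0 a b] a b by simp
  have "pairD al be a b = (al+be) * dk (?th*(2*a-1)) (?th*(2*b-1)) / ln 2"
    using pairD_dk[OF ab w a b] .
  also have "\<dots> \<le> (al+be) * (?th^2 * dk (2*a-1) (2*b-1)) / ln 2"
    using k w by (intro divide_right_mono mult_left_mono) auto
  also have "\<dots> = ((al+be) * ?th^2) * (dk (2*a-1) (2*b-1) / ln 2)"
    by (simp add: mult.assoc)
  also have "\<dots> = ((al-be)^2/(al+be)) * pairD 1 0 a b"
    by (simp only: wth2[OF w] p1)
  finally show ?thesis .
qed

lemma phi_abs: "phi \<bar>u\<bar> = phi u"
  by (cases "u \<ge> 0") (auto simp: phi_even)

lemma pairD_half:
  assumes ab: "0 \<le> al" "0 \<le> be" "0 < al + be" and a: "0 \<le> a" "a \<le> 1"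
  shows "ln 2 * pairD al be a (1/2) = (al+be) * dk (\<bar>2*a-1\<bar> * \<bar>(al-be)/(al+be)\<bar>) 0"
proof -
  have "pairD al be a (1/2) = (al+be) * dk (((al-be)/(al+be))*(2*a-1)) 0 / ln 2"
    using pairD_dk[OF ab a, of "1/2"] by simp
  moreover have "dk (((al-be)/(al+be))*(2*a-1)) 0 = dk (\<bar>2*a-1\<bar> * \<bar>(al-be)/(al+be)\<bar>) 0"
    by (metis phi_dk phi_abs abs_mult mult.commute)
  ultimately show ?thesis by simp
qed

lemma pairD_T2:
  assumes ab: "0 \<le> al" "0 \<le> be" and a: "0 \<le> a" "a \<le> 1" and mu: "0 < mu" "mu < 1"
  shows "(al+be) * dk (\<bar>2*a-1\<bar>*mu) 0 + (\<bar>2*a-1\<bar> * ath (\<bar>2*a-1\<bar>*mu) / (2*mu)) * ((al-be)^2/(al+be) - (al+be)*mu^2)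
     \<le> ln 2 * pairD al be a (1/2)"
proof (cases "al + be = 0")
  case True then have "al = 0" "be = 0" using ab by auto
  then show ?thesis by (simp add: pairD_00)
next
  case False
  then have w: "0 < al + be" using ab by simp
  define th where "th = (al-be)/(al+be)"
  define X where "X = \<bar>2*a-1\<bar>"
  define c where "c = X * ath (X*mu) / (2*mu)"
  define W where "W = al + be"
  have t: "dk (X*mu) 0 + c * (\<bar>th\<bar>^2 - mu^2) \<le> dk (X*\<bar>th\<bar>) 0"
    unfolding c_def using th_bound[OF ab] a mu unfolding th_def X_def by (intro tangent) (auto simp: abs_le_iff)
  have m: "W * (dk (X*mu) 0 + c * (\<bar>th\<bar>^2 - mu^2)) \<le> W * dk (X*\<bar>th\<bar>) 0"
    using t w unfolding W_def by (intro mult_left_mono) auto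
  have eq1: "W * (\<bar>th\<bar>^2 - mu^2) = (al-be)^2/(al+be) - (al+be)*mu^2"
    unfolding W_def th_def power2_abs right_diff_distrib wth2[OF w] ..
  have eq2: "ln 2 * pairD al be a (1/2) = W * dk (X*\<bar>th\<bar>) 0"
    using pairD_half[OF ab w a] unfolding W_def X_def th_def .
  have "W * dk (X*mu) 0 + c * (W * (\<bar>th\<bar>^2 - mu^2)) \<le> W * dk (X*\<bar>th\<bar>) 0"
    using m by (simp add: algebra_simps)
  then show ?thesis unfolding eq1 eq2 by (simp add: W_def X_def c_def)
qed

lemma pairD_M1:
  assumes ab: "0 \<le> al" "0 \<le> be" and a: "0 \<le> a" "a \<le> 1" and eq: "(al-be)^2/(al+be) = al+be"
  shows "ln 2 * pairD al be a (1/2) = (al+be) * dk \<bar>2*a-1\<bar> 0"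
proof (cases "al + be = 0")
  case True then have "al = 0" "be = 0" using ab by auto
  then show ?thesis by (simp add: pairD_00)
next
  case False
  then have w: "0 < al + be" using ab by simp
  define th where "th = (al-be)/(al+be)"
  have "(al+be) * th^2 = (al+be) * 1" using wth2[OF w] eq unfolding th_def by simp
  then have "th^2 = 1" using w by simp
  then have h0: "\<bar>th\<bar> = 1" using power2_eq_1_iff[of th] by auto
  have h: "\<bar>(al-be)/(al+be)\<bar> = 1" using h0 unfolding th_def .
  show ?thesis using pairD_half[OF ab w a] unfolding h by simp
qed




lemma sum_split:
  fixes f :: "int \<Rightarrow> real"
  shows "(\<Sum>y\<in>{-int n..int n}. f y) = f 0 + (\<Sum>y\<in>{1..int n}. f y + f (-y))"
proof (induction n)
  case 0 then show ?case by simp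
next
  case (Suc n)
  have e1: "{-int (Suc n)..int (Suc n)} = insert (int n + 1) (insert (-(int n + 1)) {-int n..int n})"
    by auto
  have e2: "{1..int (Suc n)} = insert (int n + 1) {1..int n}" by auto
  have "(\<Sum>y\<in>{-int (Suc n)..int (Suc n)}. f y) = f (int n + 1) + (f (-(int n + 1)) + (\<Sum>y\<in>{-int n..int n}. f y))"
    unfolding e1 by (simp add: sum.insert)
  also have "\<dots> = f 0 + (\<Sum>y\<in>{1..int (Suc n)}. f y + f (-y))"
    unfolding e2 Suc by (simp add: sum.insert)
  finally show ?case .
qed

lemma kl_tm: "kl A p q = (\<Sum>a\<in>A. tm (p a) (q a))"
  by (simp add: kl_def tm_def)

lemma out_dist_eq: "out_dist W P y = P False * W False y + P True * W True y"
  by (simp add: out_dist_def UNIV_bool)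

lemma biso_sym:
  assumes "biso l W" "y \<in> out_alph l"
  shows "W True y = W False (-y)"
proof -
  have "-y \<in> out_alph l" using assms(2) by (auto simp: out_alph_def)
  then show ?thesis using assms(1) by (auto simp: biso_def)
qed

lemma biso_nonneg: "biso l W \<Longrightarrow> y \<in> out_alph l \<Longrightarrow> 0 \<le> W x y"
  by (simp add: biso_def is_channel_def)

lemma biso_l: "biso l W \<Longrightarrow> 1 \<le> l"
  by (simp add: biso_def)

lemma in_alph: "y \<in> {1..int l} \<Longrightarrow> y \<in> out_alph l" "y \<in> {1..int l} \<Longrightarrow> -y \<in> out_alph l"
  "0 \<in> out_alph l"
  by (auto simp: out_alph_def)

lemma Dec:
  assumes W: "biso l W" and P: "P True = 1 - P False" and Q: "Q True = 1 - Q False"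
  shows "kl (out_alph l) (out_dist W P) (out_dist W Q) =
     (\<Sum>y\<in>{1..int l}. pairD (W False y) (W False (-y)) (P False) (Q False))"
proof -
  have z: "W True 0 = W False 0" using biso_sym[OF W in_alph(3)] by simp
  have "tm (out_dist W P 0) (out_dist W Q 0) = 0"
  proof -
    have "out_dist W P 0 = W False 0" "out_dist W Q 0 = W False 0"
      unfolding out_dist_eq z P Q by (simp_all add: algebra_simps)
    then show ?thesis by (simp add: tm_same)
  qed
  moreover have "tm (out_dist W P y) (out_dist W Q y) + tm (out_dist W P (-y)) (out_dist W Q (-y))
      = pairD (W False y) (W False (-y)) (P False) (Q False)" if y: "y \<in> {1..int l}" for y
  proof -
    have s1: "W True y = W False (-y)" using biso_sym[OF W in_alph(1)[OF y]] .
    have s2: "W True (-y) = W False y" using biso_sym[OF W in_alph(2)[OF y]] by simp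
    show ?thesis unfolding pairD_def out_dist_eq s1 s2 P Q by (simp add: algebra_simps)
  qed
  ultimately show ?thesis unfolding kl_tm out_alph_def sum_split by simp
qed

lemma kl_bool: "P True = 1 - P False \<Longrightarrow> Q True = 1 - Q False \<Longrightarrow> kl UNIV P Q = pairD 1 0 (P False) (Q False)"
  by (simp add: kl_tm UNIV_bool pairD_def)

lemma input_dist: "is_input_dist P \<Longrightarrow> P True = 1 - P False \<and> 0 \<le> P False \<and> P False \<le> 1"
  unfolding is_input_dist_def by (metis add_diff_cancel_left' le_add_same_cancel1)

lemma sumW:
  assumes W: "biso l W"
  shows "(\<Sum>y\<in>{1..int l}. W False y + W False (-y)) = 1 - W False 0"
proof -
  have "(\<Sum>y\<in>out_alph l. W False y) = 1" using W unfolding biso_def is_channel_def by blast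
  then show ?thesis unfolding out_alph_def sum_split by simp
qed

definition U :: "bool \<Rightarrow> real" where "U x = 1/2"

definition Kc :: "nat \<Rightarrow> (bool \<Rightarrow> int \<Rightarrow> real) \<Rightarrow> real" where
  "Kc l W = (\<Sum>y\<in>out_alph l. tm (W False y) (out_dist W U y))"

lemma sum_reflect: "(\<Sum>y\<in>out_alph l. g (-y)) = (\<Sum>y\<in>out_alph l. (g y :: real))"
  by (rule sum.reindex_bij_witness[of _ uminus uminus]) (auto simp: out_alph_def)

lemma oU_sym:
  assumes W: "biso l W" and y: "y \<in> out_alph l"
  shows "out_dist W U (-y) = out_dist W U y"
proof -
  have y': "-y \<in> out_alph l" using y by (auto simp: out_alph_def)
  show ?thesis using biso_sym[OF W y] biso_sym[OF W y'] by (simp add: out_dist_eq U_def)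
qed

lemma golden:
  assumes W: "biso l W" and P: "is_input_dist P"
  shows "mutual_info l W P = Kc l W - kl (out_alph l) (out_dist W P) (out_dist W U)"
proof -
  define oP where "oP = out_dist W P"
  define oU where "oU = out_dist W U"
  have Pn: "0 \<le> P x" for x using P by (simp add: is_input_dist_def)
  have s1: "(if P x * W x y = 0 then 0 else P x * W x y * log 2 (W x y / oP y))
      = P x * tm (W x y) (oU y) - P x * W x y * log 2 (oP y / oU y)" if y: "y \<in> out_alph l" for x y
  proof (cases "P x * W x y = 0")
    case True
    then show ?thesis by (auto simp: tm_def)
  next
    case False
    have wn: "0 \<le> W z y" for z using biso_nonneg[OF W y] .
    have Wp: "W x y > 0" using False wn[of x] by (simp add: less_le)
    have Pp: "P x > 0" using False Pn[of x] by (simp add: less_le)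
    have "P x * W x y \<le> oP y"
    proof (cases x)
      case True then show ?thesis using Pn wn by (simp add: oP_def out_dist_eq)
    next
      case False then show ?thesis using Pn wn by (simp add: oP_def out_dist_eq)
    qed
    then have oPp: "oP y > 0" using Pp Wp by (smt (verit) mult_pos_pos)
    have "W x y / 2 \<le> oU y"
    proof (cases x)
      case True then show ?thesis using wn by (simp add: oU_def out_dist_eq U_def)
    next
      case False then show ?thesis using wn by (simp add: oU_def out_dist_eq U_def)
    qed
    then have oUp: "oU y > 0" using Wp by linarith
    have e: "log 2 (W x y / oP y) = log 2 (W x y / oU y) - log 2 (oP y / oU y)"
      using Wp oPp oUp by (simp add: log_divide)
    have "W x y \<noteq> 0" using Wp by simp
    then show ?thesis using False unfolding e tm_def by (simp add: algebra_simps)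
  qed
  have s3: "(\<Sum>x\<in>UNIV. P x * W x y * log 2 (oP y / oU y)) = tm (oP y) (oU y)" for y
  proof -
    have "(\<Sum>x\<in>UNIV. P x * W x y * log 2 (oP y / oU y)) = oP y * log 2 (oP y / oU y)"
      unfolding oP_def out_dist_def by (simp add: sum_distrib_right)
    then show ?thesis by (simp add: tm_def)
  qed
  have s4: "(\<Sum>y\<in>out_alph l. tm (W True y) (oU y)) = Kc l W"
  proof -
    have "(\<Sum>y\<in>out_alph l. tm (W True y) (oU y)) = (\<Sum>y\<in>out_alph l. tm (W False (-y)) (oU (-y)))"
      by (rule sum.cong) (auto simp: biso_sym[OF W] oU_def oU_sym[OF W])
    also have "\<dots> = Kc l W" unfolding Kc_def oU_def by (rule sum_reflect)
    finally show ?thesis .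
  qed
  have "mutual_info l W P = (\<Sum>x\<in>UNIV. \<Sum>y\<in>out_alph l. P x * tm (W x y) (oU y) - P x * W x y * log 2 (oP y / oU y))"
    unfolding mutual_info_def oP_def[symmetric]
    by (intro sum.cong refl s1)
  also have "\<dots> = (\<Sum>x\<in>UNIV. P x * (\<Sum>y\<in>out_alph l. tm (W x y) (oU y)))
       - (\<Sum>y\<in>out_alph l. \<Sum>x\<in>UNIV. P x * W x y * log 2 (oP y / oU y))"
    by (simp add: sum_subtractf sum_distrib_left sum.swap[of _ UNIV])
  also have "\<dots> = (\<Sum>x\<in>UNIV. P x * (\<Sum>y\<in>out_alph l. tm (W x y) (oU y))) - kl (out_alph l) oP oU"
    by (simp only: s3 kl_tm)
  also have "\<dots> = Kc l W - kl (out_alph l) oP oU"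
  proof -
    have "(\<Sum>x\<in>UNIV. P x * (\<Sum>y\<in>out_alph l. tm (W x y) (oU y))) = (P False + P True) * Kc l W"
      using s4 by (simp add: UNIV_bool Kc_def oU_def algebra_simps)
    then show ?thesis using P by (simp add: is_input_dist_def)
  qed
  finally show ?thesis by (simp add: oP_def oU_def)
qed

lemma U_dist: "is_input_dist U" by (simp add: is_input_dist_def U_def)

lemma DW_eq:
  assumes W: "biso l W" and P: "is_input_dist P"
  shows "kl (out_alph l) (out_dist W P) (out_dist W U) =
     (\<Sum>y\<in>{1..int l}. pairD (W False y) (W False (-y)) (P False) (1/2))"
  using Dec[OF W, of P U] input_dist[OF P] by (simp add: U_def)

lemma DW_nonneg:
  assumes W: "biso l W" and P: "is_input_dist P"
  shows "0 \<le> kl (out_alph l) (out_dist W P) (out_dist W U)"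
  unfolding DW_eq[OF W P]
  by (intro sum_nonneg pairD_nonneg biso_nonneg[OF W] in_alph) (use input_dist[OF P] in auto)

lemma kl_same: "kl A p p = 0"
  by (simp add: kl_tm tm_same)

lemma capacity_eq:
  assumes W: "biso l W"
  shows "capacity l W = Kc l W"
  unfolding capacity_def
proof (rule cSup_eq_maximum)
  show "Kc l W \<in> {mutual_info l W P |P. is_input_dist P}"
  proof -
    have "mutual_info l W U = Kc l W" using golden[OF W U_dist] by (simp add: kl_same)
    then show ?thesis using U_dist by (intro CollectI exI[of _ U]) auto
  qed
  fix x assume "x \<in> {mutual_info l W P |P. is_input_dist P}"
  then obtain P where "is_input_dist P" "x = mutual_info l W P" by auto
  then show "x \<le> Kc l W" using golden[OF W, of P] DW_nonneg[OF W, of P] by simp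
qed

definition mW :: "nat \<Rightarrow> (bool \<Rightarrow> int \<Rightarrow> real) \<Rightarrow> real" where
  "mW l W = (\<Sum>y\<in>{1..int l}. (W False y - W False (-y))^2 / (W False y + W False (-y)))"

lemma q_le: "0 \<le> al \<Longrightarrow> 0 \<le> (be::real) \<Longrightarrow> (al-be)^2/(al+be) \<le> al+be"
proof (cases "al+be = 0")
  case True then show ?thesis by simp
next
  case False
  assume ab: "0 \<le> al" "0 \<le> be"
  then have w: "0 < al+be" using False by simp
  have "(al-be)^2 \<le> (al+be)^2" using ab by (simp add: power2_eq_square algebra_simps)
  then have "(al-be)^2/(al+be) \<le> (al+be)^2/(al+be)" using w by (intro divide_right_mono) auto
  then show ?thesis using w by (simp add: power2_eq_square)
qed

lemma mW_le1:
  assumes W: "biso l W"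
  shows "mW l W \<le> 1"
proof -
  have "mW l W \<le> (\<Sum>y\<in>{1..int l}. W False y + W False (-y))"
    unfolding mW_def by (intro sum_mono q_le biso_nonneg[OF W] in_alph) auto
  also have "\<dots> = 1 - W False 0" by (rule sumW[OF W])
  also have "\<dots> \<le> 1" using biso_nonneg[OF W in_alph(3)] by simp
  finally show ?thesis .
qed

lemma mW_nonneg:
  assumes W: "biso l W"
  shows "0 \<le> mW l W"
  unfolding mW_def
  by (intro sum_nonneg divide_nonneg_nonneg add_nonneg_nonneg biso_nonneg[OF W] in_alph) auto

lemma SDPI:
  assumes W: "biso l W" and P: "is_input_dist P" and Q: "is_input_dist Q" and b: "0 < Q False" "Q False < 1"
  shows "kl (out_alph l) (out_dist W P) (out_dist W Q) \<le> mW l W * kl UNIV P Q"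
proof -
  have "kl (out_alph l) (out_dist W P) (out_dist W Q) =
     (\<Sum>y\<in>{1..int l}. pairD (W False y) (W False (-y)) (P False) (Q False))"
    using Dec[OF W] input_dist[OF P] input_dist[OF Q] by simp
  also have "\<dots> \<le> (\<Sum>y\<in>{1..int l}. ((W False y - W False (-y))^2 / (W False y + W False (-y))) * pairD 1 0 (P False) (Q False))"
    by (intro sum_mono pairD_P1 biso_nonneg[OF W] in_alph) (use input_dist[OF P] b in auto)
  also have "\<dots> = mW l W * kl UNIV P Q"
    using kl_bool input_dist[OF P] input_dist[OF Q] by (simp add: mW_def sum_distrib_right)
  finally show ?thesis .
qed

definition etaset :: "nat \<Rightarrow> (bool \<Rightarrow> int \<Rightarrow> real) \<Rightarrow> real set" where
  "etaset l W = {kl (out_alph l) (out_dist W P) (out_dist W Q) / kl UNIV P Q | P Q.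
      is_input_dist P \<and> is_input_dist Q \<and> abs_cont UNIV P Q \<and> 0 < kl UNIV P Q}"

lemma eta_def': "eta_KL l W = Sup (etaset l W)"
  by (simp add: eta_KL_def etaset_def)

lemma etaset_le:
  assumes W: "biso l W" and r: "r \<in> etaset l W"
  shows "r \<le> mW l W"
proof -
  obtain P Q where P: "is_input_dist P" and Q: "is_input_dist Q" and ac: "abs_cont UNIV P Q"
    and pos: "0 < kl UNIV P Q" and r: "r = kl (out_alph l) (out_dist W P) (out_dist W Q) / kl UNIV P Q"
    using r unfolding etaset_def by blast
  have b: "0 < Q False" "Q False < 1"
  proof -
    have ne: "P \<noteq> Q" using pos by (auto simp: kl_same)
    have "Q False \<noteq> 0"
    proof
      assume "Q False = 0"
      then have "P False = 0" using ac by (auto simp: abs_cont_def)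
      then have "P = Q"
      proof (intro ext)
        fix x show "P x = Q x" using input_dist[OF P] input_dist[OF Q] \<open>Q False = 0\<close> \<open>P False = 0\<close>
          by (cases x) auto
      qed
      then show False using ne by simp
    qed
    moreover have "Q True \<noteq> 0"
    proof
      assume "Q True = 0"
      then have "P True = 0" using ac by (auto simp: abs_cont_def)
      then have "P = Q"
      proof (intro ext)
        fix x show "P x = Q x" using input_dist[OF P] input_dist[OF Q] \<open>Q True = 0\<close> \<open>P True = 0\<close>
          by (cases x) auto
      qed
      then show False using ne by simp
    qed
    ultimately show "0 < Q False" "Q False < 1" using input_dist[OF Q] by auto
  qed
  have "kl (out_alph l) (out_dist W P) (out_dist W Q) \<le> mW l W * kl UNIV P Q"
    by (rule SDPI[OF W P Q b])
  then show ?thesis unfolding r using pos by (simp add: divide_le_eq)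
qed

definition P1 :: "bool \<Rightarrow> real" where "P1 x = (if x then 0 else 1)"

lemma P1_in:
  assumes W: "biso l W"
  shows "kl (out_alph l) (out_dist W P1) (out_dist W U) \<in> etaset l W"
proof -
  have P1d: "is_input_dist P1" by (simp add: is_input_dist_def P1_def)
  have k: "kl UNIV P1 U = 1" by (simp add: kl_tm UNIV_bool tm_def P1_def U_def)
  show ?thesis unfolding etaset_def mem_Collect_eq
    by (rule exI[of _ P1], rule exI[of _ U]) (use P1d U_dist k in \<open>auto simp: abs_cont_def U_def\<close>)
qed

lemma eta_bounds:
  assumes W: "biso l W"
  shows "0 \<le> eta_KL l W" "eta_KL l W \<le> mW l W" "bdd_above (etaset l W)"
proof -
  show bdd: "bdd_above (etaset l W)" using etaset_le[OF W] by (auto simp: bdd_above_def)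
  have "kl (out_alph l) (out_dist W P1) (out_dist W U) \<le> eta_KL l W"
    unfolding eta_def' by (rule cSup_upper[OF P1_in[OF W] bdd])
  moreover have "0 \<le> kl (out_alph l) (out_dist W P1) (out_dist W U)"
    by (rule DW_nonneg[OF W]) (simp add: is_input_dist_def P1_def)
  ultimately show "0 \<le> eta_KL l W" by simp
  show "eta_KL l W \<le> mW l W"
    unfolding eta_def' using P1_in[OF W] etaset_le[OF W] by (intro cSup_least) auto
qed

lemma E3:
  assumes W: "biso l W" and P: "is_input_dist P"
  shows "kl (out_alph l) (out_dist W P) (out_dist W U) \<le> eta_KL l W * kl UNIV P U"
proof -
  have k0: "0 \<le> kl UNIV P U"
    using kl_bool[of P U] input_dist[OF P] pairD_nonneg[of 1 0 "P False" "1/2"] by (simp add: U_def)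
  show ?thesis
  proof (cases "kl UNIV P U = 0")
    case True
    have "kl (out_alph l) (out_dist W P) (out_dist W U) \<le> mW l W * kl UNIV P U"
      by (rule SDPI[OF W P U_dist]) (auto simp: U_def)
    then show ?thesis using True by simp
  next
    case False
    then have pos: "0 < kl UNIV P U" using k0 by simp
    have "kl (out_alph l) (out_dist W P) (out_dist W U) / kl UNIV P U \<in> etaset l W"
      unfolding etaset_def mem_Collect_eq
      by (rule exI[of _ P], rule exI[of _ U]) (use P U_dist pos in \<open>auto simp: abs_cont_def U_def\<close>)
    then have "kl (out_alph l) (out_dist W P) (out_dist W U) / kl UNIV P U \<le> eta_KL l W"
      unfolding eta_def' by (rule cSup_upper[OF _ eta_bounds(3)[OF W]])
    then show ?thesis using pos by (simp add: divide_le_eq)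
  qed
qed




lemma alph1: "out_alph 1 = {-1, 0, 1}"
  by (auto simp: out_alph_def)

lemma bec_biso: "0 \<le> e \<Longrightarrow> e \<le> 1 \<Longrightarrow> biso 1 (bec e)"
  unfolding biso_def is_channel_def alph1
  by (auto simp: bec_def UNIV_bool)

lemma bsc_biso: "0 \<le> r \<Longrightarrow> r \<le> 1 \<Longrightarrow> biso 1 (bsc r)"
  unfolding biso_def is_channel_def alph1
  by (auto simp: bsc_def UNIV_bool)

lemma tm_pos_half: "0 < x \<Longrightarrow> tm x (1/2) = x + x * log 2 x"
proof -
  assume x: "0 < x"
  have "x / (1/2) = 2 * x" by simp
  then show ?thesis using x by (simp add: tm_def log_mult distrib_left)
qed

lemma tm_zero[simp]: "tm 0 q = 0" by (simp add: tm_def)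

lemma halfs: "r/2 + (1-r)/2 = (1/2::real)" "(1-r)/2 + r/2 = (1/2::real)" by (simp_all add: field_simps)

lemma Kc_bec: "0 \<le> e \<Longrightarrow> e \<le> 1 \<Longrightarrow> Kc 1 (bec e) = 1 - e"
proof -
  assume e: "0 \<le> e" "e \<le> 1"
  have "Kc 1 (bec e) = tm e e + tm (1-e) ((1-e)/2)"
    unfolding Kc_def alph1 by (simp add: out_dist_eq U_def bec_def)
  also have "\<dots> = 1 - e"
  proof (cases "e = 1")
    case True then show ?thesis by (simp add: tm_def)
  next
    case False
    then have p: "0 < 1 - e" using e by simp
    then have "(1-e)/((1-e)/2) = 2" by (simp add: field_simps)
    then show ?thesis using p by (simp add: tm_def tm_same)
  qed
  finally show ?thesis .
qed

lemma Kc_bsc: "0 \<le> r \<Longrightarrow> r \<le> 1 \<Longrightarrow> Kc 1 (bsc r) = 1 - h2 r"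
proof -
  assume r: "0 \<le> r" "r \<le> 1"
  have "Kc 1 (bsc r) = tm r (1/2) + tm (1-r) (1/2)"
    unfolding Kc_def alph1 by (simp add: out_dist_eq U_def bsc_def halfs)
  also have "\<dots> = 1 - h2 r"
  proof -
    consider "r = 0" | "r = 1" | "0 < r \<and> r < 1" using r by linarith
    then show ?thesis
    proof cases
      case 1 then show ?thesis by (simp add: tm_pos_half h2_def tm_def)
    next
      case 2 then show ?thesis by (simp add: tm_pos_half h2_def tm_def)
    next
      case 3
      then have "tm r (1/2) = r + r * log 2 r" "tm (1-r) (1/2) = (1-r) + (1-r) * log 2 (1-r)"
        by (simp_all add: tm_pos_half)
      then show ?thesis using 3 by (simp add: h2_def algebra_simps)
    qed
  qed
  finally show ?thesis .
qed

lemma D_bec: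
  assumes e: "0 \<le> e" "e \<le> 1" and P: "is_input_dist P"
  shows "kl (out_alph 1) (out_dist (bec e) P) (out_dist (bec e) U) = (1-e) * kl UNIV P U"
proof -
  have "kl (out_alph 1) (out_dist (bec e) P) (out_dist (bec e) U) = pairD ((1-e)*1) ((1-e)*0) (P False) (1/2)"
    using DW_eq[OF bec_biso[OF e] P] by (simp add: bec_def)
  also have "\<dots> = (1-e) * pairD 1 0 (P False) (1/2)" using e by (intro pairD_scale) simp
  also have "\<dots> = (1-e) * kl UNIV P U" using kl_bool[of P U] input_dist[OF P] by (simp add: U_def)
  finally show ?thesis .
qed

lemma D_bsc:
  assumes r: "0 \<le> r" "r \<le> 1" and P: "is_input_dist P"
  shows "kl (out_alph 1) (out_dist (bsc r) P) (out_dist (bsc r) U) = pairD (1-r) r (P False) (1/2)"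
  using DW_eq[OF bsc_biso[OF r] P] by (simp add: bsc_def)




lemma I2:
  assumes W: "biso l W" and P: "is_input_dist P"
  shows "pairD (1 - (1 - sqrt (eta_KL l W))/2) ((1 - sqrt (eta_KL l W))/2) (P False) (1/2)
     \<le> kl (out_alph l) (out_dist W P) (out_dist W U)"
proof -
  define eta where "eta = eta_KL l W"
  define s where "s = sqrt eta"
  define r where "r = (1 - s)/2"
  define a where "a = P False"
  define X where "X = \<bar>2*a-1\<bar>"
  define m where "m = mW l W"
  define D where "D = kl (out_alph l) (out_dist W P) (out_dist W U)"
  define al where "al y = W False y" for y
  define be where "be y = W False (-y)" for y
  define Wt where "Wt = (\<Sum>y\<in>{1..int l}. al y + be y)"
  have e0: "0 \<le> eta" "eta \<le> m" using eta_bounds[OF W] by (simp_all add: eta_def m_def)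
  have m1: "m \<le> 1" using mW_le1[OF W] by (simp add: m_def)
  have s01: "0 \<le> s" "s \<le> 1" using e0 m1 by (simp_all add: s_def)
  have a01: "0 \<le> a" "a \<le> 1" using input_dist[OF P] by (simp_all add: a_def)
  have X01: "0 \<le> X" "X \<le> 1" using a01 by (simp_all add: X_def abs_le_iff)
  have abn: "0 \<le> al y" "0 \<le> be y" if "y \<in> {1..int l}" for y
    using biso_nonneg[OF W in_alph(1)[OF that]] biso_nonneg[OF W in_alph(2)[OF that]]
    by (simp_all add: al_def be_def)
  have Dsum: "D = (\<Sum>y\<in>{1..int l}. pairD (al y) (be y) a (1/2))"
    unfolding D_def al_def be_def a_def by (rule DW_eq[OF W P])
  have msum: "m = (\<Sum>y\<in>{1..int l}. (al y - be y)^2 / (al y + be y))"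
    by (simp add: m_def mW_def al_def be_def)
  have Wt1: "Wt \<le> 1" unfolding Wt_def al_def be_def sumW[OF W]
    using biso_nonneg[OF W in_alph(3)] by simp
  have lhs: "ln 2 * pairD (1 - r) r a (1/2) = dk (X*s) 0"
  proof -
    have r01: "0 \<le> r" "r \<le> 1/2" using s01 by (simp_all add: r_def)
    have "ln 2 * pairD (1 - r) r a (1/2) = (1 - r + r) * dk (X * \<bar>(1 - r - r)/(1 - r + r)\<bar>) 0"
      using pairD_half[of "1-r" r a] r01 a01 unfolding X_def by simp
    also have "\<dots> = dk (X*s) 0" using s01 by (simp add: r_def)
    finally show ?thesis .
  qed
  have D0: "0 \<le> D" unfolding D_def by (rule DW_nonneg[OF W P])
  have key: "dk (X*s) 0 \<le> ln 2 * D"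
  proof -
    consider "m = 0" | "0 < m \<and> m < 1" | "m = 1" using e0 m1 by linarith
    then show ?thesis
    proof cases
      case 1
      then have "s = 0" using e0 by (simp add: s_def)
      then show ?thesis using D0 dk_self[of 0] by simp
    next
      case 2
      define mu where "mu = sqrt m"
      have mu: "0 < mu" "mu < 1" "mu^2 = m" using 2 by (simp_all add: mu_def)
      define c where "c = X * ath (X*mu) / (2*mu)"
      define Dm where "Dm = dk (X*mu) 0"
      have T: "(al y + be y) * Dm + c * ((al y - be y)^2/(al y + be y) - (al y + be y)*mu^2)
          \<le> ln 2 * pairD (al y) (be y) a (1/2)" if "y \<in> {1..int l}" for y
        unfolding Dm_def c_def X_def using pairD_T2[OF abn[OF that] a01 mu(1,2)] .
      have "(\<Sum>y\<in>{1..int l}. (al y + be y) * Dm + c * ((al y - be y)^2/(al y + be y) - (al y + be y)*mu^2))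
          \<le> (\<Sum>y\<in>{1..int l}. ln 2 * pairD (al y) (be y) a (1/2))"
        by (intro sum_mono T)
      also have "\<dots> = ln 2 * D" by (simp add: Dsum sum_distrib_left)
      also have "(\<Sum>y\<in>{1..int l}. (al y + be y) * Dm + c * ((al y - be y)^2/(al y + be y) - (al y + be y)*mu^2))
          = Wt * Dm + c * (m - Wt * mu^2)"
      proof -
        have h1: "(\<Sum>y\<in>{1..int l}. (al y + be y) * Dm) = Wt * Dm" by (simp add: Wt_def sum_distrib_right)
        have h2: "(\<Sum>y\<in>{1..int l}. c * ((al y + be y) * mu^2)) = c * (Wt * mu^2)"
          by (simp add: Wt_def sum_distrib_right sum_distrib_left)
        have h3: "(\<Sum>y\<in>{1..int l}. c * ((al y - be y)^2/(al y + be y))) = c * m"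
          by (simp add: msum sum_distrib_left)
        show ?thesis
          unfolding right_diff_distrib sum.distrib sum_subtractf h1 h2 h3 ..
      qed
      finally have S: "Wt * Dm + c * (m - Wt * mu^2) \<le> ln 2 * D" .
      have t0: "Dm + c * (0^2 - mu^2) \<le> dk (X*0) 0"
        unfolding Dm_def c_def using X01 mu by (intro tangent) auto
      then have cm: "Dm \<le> c * m" using mu dk_self[of 0] by simp
      have "Dm = Wt * Dm + (1 - Wt) * Dm" by (simp add: algebra_simps)
      also have "\<dots> \<le> Wt * Dm + (1 - Wt) * (c * m)" using cm Wt1 by (intro add_left_mono mult_left_mono) auto
      also have "\<dots> = Wt * Dm + c * (m - Wt * mu^2)" using mu by (simp add: algebra_simps)
      finally have "Dm \<le> ln 2 * D" using S by simp
      moreover have "dk (X*s) 0 \<le> Dm"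
      proof -
        have "s \<le> mu" using e0 by (simp add: s_def mu_def)
        then have "X*s \<le> X*mu" using X01 by (intro mult_left_mono) auto
        moreover have "X*mu \<le> 1" using X01 mu by (intro mult_le_one) auto
        ultimately have "phi (X*s) \<le> phi (X*mu)" using X01 s01 by (intro phi_mono) auto
        then show ?thesis by (simp add: phi_dk Dm_def)
      qed
      ultimately show ?thesis by simp
    next
      case 3
      have qle: "(al y - be y)^2/(al y + be y) \<le> al y + be y" if "y \<in> {1..int l}" for y
        using q_le abn[OF that] by blast
      have "(\<Sum>y\<in>{1..int l}. (al y + be y) - (al y - be y)^2/(al y + be y)) = Wt - m"
        by (simp add: Wt_def msum sum_subtractf)
      also have "\<dots> \<le> 0" using Wt1 3 by simp
      finally have sle: "(\<Sum>y\<in>{1..int l}. (al y + be y) - (al y - be y)^2/(al y + be y)) \<le> 0" .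
      have "(\<Sum>y\<in>{1..int l}. (al y + be y) - (al y - be y)^2/(al y + be y)) \<ge> 0"
        using qle by (intro sum_nonneg) auto
      then have "(\<Sum>y\<in>{1..int l}. (al y + be y) - (al y - be y)^2/(al y + be y)) = 0" using sle by simp
      then have eqq: "(al y - be y)^2/(al y + be y) = al y + be y" if "y \<in> {1..int l}" for y
        using sum_nonneg_eq_0_iff[of "{1..int l}" "\<lambda>y. (al y + be y) - (al y - be y)^2/(al y + be y)"] qle that
        by auto
      have Wt_eq: "Wt = 1"
      proof -
        have "Wt - m = 0" using \<open>(\<Sum>y\<in>{1..int l}. _) = 0\<close> by (simp add: Wt_def msum sum_subtractf)
        then show ?thesis using 3 by simp
      qed
      have "ln 2 * D = (\<Sum>y\<in>{1..int l}. ln 2 * pairD (al y) (be y) a (1/2))"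
        by (simp add: Dsum sum_distrib_left)
      also have "\<dots> = (\<Sum>y\<in>{1..int l}. (al y + be y) * dk X 0)"
        by (intro sum.cong refl) (use pairD_M1[OF abn(1,2) a01 eqq] in \<open>simp add: X_def\<close>)
      also have "\<dots> = Wt * dk X 0" unfolding Wt_def by (rule sum_distrib_right[symmetric])
      also have "\<dots> = dk X 0" using Wt_eq by simp
      finally have "ln 2 * D = dk X 0" .
      moreover have "phi (X*s) \<le> phi X"
      proof -
        have "X*s \<le> X*1" using X01 s01 by (intro mult_left_mono) auto
        then show ?thesis using X01 s01 by (intro phi_mono) auto
      qed
      ultimately show ?thesis by (simp add: phi_dk)
    qed
  qed
  have "ln 2 * pairD (1 - r) r a (1/2) \<le> ln 2 * D" using lhs key by simp
  then have "pairD (1 - r) r a (1/2) \<le> D" by simp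
  then show ?thesis by (simp add: r_def s_def eta_def a_def D_def)
qed




theorem mainTheorem10:
  fixes l :: nat and W :: "bool \<Rightarrow> int \<Rightarrow> real"
  assumes "biso l W"
  shows "secrecy_capacity 1 (bec (1 - eta_KL l W)) l W = eta_KL l W - capacity l W
     \<and> secrecy_capacity l W 1 (bsc ((1 - sqrt (eta_KL l W)) / 2))
         = capacity l W - 1 + h2 ((1 - sqrt (eta_KL l W)) / 2)"
proof
  note W = assms
  define eta where "eta = eta_KL l W"
  have e0: "0 \<le> eta" "eta \<le> 1" using eta_bounds[OF W] mW_le1[OF W] by (simp_all add: eta_def)
  have cap: "capacity l W = Kc l W" by (rule capacity_eq[OF W])
  have MW: "mutual_info l W P = Kc l W - kl (out_alph l) (out_dist W P) (out_dist W U)" if "is_input_dist P" for P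
    by (rule golden[OF W that])
  have e1: "0 \<le> 1 - eta" "1 - eta \<le> 1" using e0 by auto
  have MB: "mutual_info 1 (bec (1 - eta)) P = eta - eta * kl UNIV P U" if P: "is_input_dist P" for P
    using golden[OF bec_biso[OF e1] P] Kc_bec[OF e1] D_bec[OF e1 P] by simp
  show "secrecy_capacity 1 (bec (1 - eta_KL l W)) l W = eta_KL l W - capacity l W"
    unfolding eta_def[symmetric] cap secrecy_capacity_def
  proof (rule cSup_eq_maximum)
    have "mutual_info 1 (bec (1 - eta)) U - mutual_info l W U = eta - Kc l W"
      using MB[OF U_dist] MW[OF U_dist] by (simp add: kl_same)
    then show "eta - Kc l W \<in> {mutual_info 1 (bec (1 - eta)) P - mutual_info l W P |P. is_input_dist P}"
      using U_dist by (intro CollectI exI[of _ U]) auto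
  next
    fix x assume "x \<in> {mutual_info 1 (bec (1 - eta)) P - mutual_info l W P |P. is_input_dist P}"
    then obtain P where P: "is_input_dist P" and x: "x = mutual_info 1 (bec (1 - eta)) P - mutual_info l W P"
      by auto
    have "kl (out_alph l) (out_dist W P) (out_dist W U) \<le> eta * kl UNIV P U"
      using E3[OF W P] by (simp add: eta_def)
    then show "x \<le> eta - Kc l W" using x MB[OF P] MW[OF P] by simp
  qed
next
  note W = assms
  define eta where "eta = eta_KL l W"
  define r where "r = (1 - sqrt eta) / 2"
  have e0: "0 \<le> eta" "eta \<le> 1" using eta_bounds[OF W] mW_le1[OF W] by (simp_all add: eta_def)
  have sq1: "0 \<le> sqrt eta" using e0(1) by (rule real_sqrt_ge_zero)
  have sq2: "sqrt eta \<le> 1" using e0(2) by simp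
  have g1: "\<And>t::real. t \<le> 1 \<Longrightarrow> 0 \<le> (1-t)/2" by simp
  have g2: "\<And>t::real. 0 \<le> t \<Longrightarrow> (1-t)/2 \<le> 1" by simp
  have ra: "0 \<le> r" unfolding r_def by (rule g1[OF sq2])
  have rb: "r \<le> 1" unfolding r_def by (rule g2[OF sq1])
  note r01 = ra rb
  have cap: "capacity l W = Kc l W" by (rule capacity_eq[OF W])
  have MW: "mutual_info l W P = Kc l W - kl (out_alph l) (out_dist W P) (out_dist W U)" if "is_input_dist P" for P
    by (rule golden[OF W that])
  have MS: "mutual_info 1 (bsc r) P = (1 - h2 r) - pairD (1 - r) r (P False) (1/2)" if P: "is_input_dist P" for P
    using golden[OF bsc_biso[OF r01] P] Kc_bsc[OF r01] D_bsc[OF r01 P] by simp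
  have MSU: "mutual_info 1 (bsc r) U = 1 - h2 r"
    using golden[OF bsc_biso[OF r01] U_dist] Kc_bsc[OF r01] by (simp add: kl_same)
  show "secrecy_capacity l W 1 (bsc ((1 - sqrt (eta_KL l W)) / 2))
         = capacity l W - 1 + h2 ((1 - sqrt (eta_KL l W)) / 2)"
    unfolding eta_def[symmetric] r_def[symmetric] cap secrecy_capacity_def
  proof (rule cSup_eq_maximum)
    have "mutual_info l W U - mutual_info 1 (bsc r) U = Kc l W - 1 + h2 r"
      using MSU MW[OF U_dist] by (simp add: kl_same)
    then show "Kc l W - 1 + h2 r \<in> {mutual_info l W P - mutual_info 1 (bsc r) P |P. is_input_dist P}"
      using U_dist by (intro CollectI exI[of _ U]) auto
  next
    fix x assume "x \<in> {mutual_info l W P - mutual_info 1 (bsc r) P |P. is_input_dist P}"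
    then obtain P where P: "is_input_dist P" and x: "x = mutual_info l W P - mutual_info 1 (bsc r) P"
      by auto
    have "pairD (1 - r) r (P False) (1/2) \<le> kl (out_alph l) (out_dist W P) (out_dist W U)"
      using I2[OF W P] by (simp add: r_def eta_def)
    then show "x \<le> Kc l W - 1 + h2 r" using x MS[OF P] MW[OF P] by simp
  qed
qed


end
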